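(* Let $p$ be a prime, $0\le\sigma'<\sigma<1$, $\delta:=(\sigma-\sigma')/(1-\sigma)$, and $a_n$ ($n\in\mathbb{N}$) defined by $a_n:=p^{\lfloor\sigma' r\rfloor}$ if $n=p^r(p^{\lfloor\delta r\rfloor+1}+1)-1$ for some $r\in\mathbb{N}$ and $a_n:=0$ otherwise. For $n\in\mathbb{N}$ let $c_n:=\frac{1}{n+1}\sum_{k\ge n}a_k\binom{k}{n}t^{k-n}\in\mathbb{Q}_p\{\{t\}\}$ and $y_g:=\sum_{n\in\mathbb{N}}c_n(X-t)^{n+1}\in\mathbb{Q}_p\{\{t\}\}[[X-t]]$. Then $|c_n|/(n+1)^{1-\sigma'}=O(1)$ as $n\to\infty$ (indeed $\le p$ for all $n$), while for every $\lambda\in[0,1-\sigma')$, $\sup_n|c_n|/(n+1)^{\lambda}=\infty$. That is, $y_g$ is exactly of log-growth $1-\sigma'$.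
   Context: $|\cdot|_p$ is the $p$-adic absolute value with $|p|_p=p^{-1}$; $\lfloor x\rfloor$ is the largest integer $\le x$. $t$ is a formal variable and $\mathbb{Q}_p\{\{t\}\}$ is the fraction field of the $p$-adic completion of $\mathbb{Z}_p[[t]][t^{-1}]$, equipped with the Gauss norm $|\sum_i b_it^i|=\sup_i|b_i|_p$. A series $\sum_m c'_m(X-t)^m$ is of log-growth $\lambda$ if $|c'_{n+1}|/(n+1)^\lambda=O(1)$ as $n\to\infty$, and exactly of log-growth $\lambda$ if it is of log-growth $\lambda$ but not of log-growth $\lambda'$ for any $\lambda'<\lambda$. *)

theory Defs
  imports "HOL-Analysis.Analysis" "HOL-Computational_Algebra.Primes"
begin

definition padic_val_rat :: "nat \<Rightarrow> rat \<Rightarrow> int" where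
  "padic_val_rat p q = (case quotient_of q of (a, b) \<Rightarrow>
      int (multiplicity (int p) a) - int (multiplicity (int p) b))"

definition padic_abs :: "nat \<Rightarrow> rat \<Rightarrow> real" where
  "padic_abs p q = (if q = 0 then 0 else real p powr (- real_of_int (padic_val_rat p q)))"

text \<open>An element of Q_p{{t}} with rational coefficients and only nonnegative powers of t
  is represented by its coefficient sequence f (f j = coefficient of t^j).
  Gauss norm: sup_j |f j|_p (in ereal, so that it can be infinite).\<close>
definition gauss_norm :: "nat \<Rightarrow> (nat \<Rightarrow> rat) \<Rightarrow> ereal" where
  "gauss_norm p f = (SUP j. ereal (padic_abs p (f j)))"

definition idx :: "nat \<Rightarrow> real \<Rightarrow> nat \<Rightarrow> nat" where
  "idx p \<delta> r = p ^ r * (p ^ (nat \<lfloor>\<delta> * real r\<rfloor> + 1) + 1) - 1"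

definition seq_a :: "nat \<Rightarrow> real \<Rightarrow> real \<Rightarrow> nat \<Rightarrow> rat" where
  "seq_a p \<sigma> \<sigma>' n =
     (let \<delta> = (\<sigma> - \<sigma>') / (1 - \<sigma>) in
      if \<exists>r. n = idx p \<delta> r
      then of_nat p ^ nat \<lfloor>\<sigma>' * real (THE r. n = idx p \<delta> r)\<rfloor>
      else 0)"

text \<open>c_n = 1/(n+1) sum_{k>=n} a_k binom(k,n) t^(k-n): coefficient of t^j.\<close>
definition coef_c :: "nat \<Rightarrow> real \<Rightarrow> real \<Rightarrow> nat \<Rightarrow> nat \<Rightarrow> rat" where
  "coef_c p \<sigma> \<sigma>' n j = seq_a p \<sigma> \<sigma>' (n + j) * of_nat ((n + j) choose n) / of_nat (n + 1)"

text \<open>y_g = sum_m c'_m (X-t)^m with c'_0 = 0 and c'_(n+1) = c_n.\<close>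
definition coef_y :: "nat \<Rightarrow> real \<Rightarrow> real \<Rightarrow> nat \<Rightarrow> nat \<Rightarrow> rat" where
  "coef_y p \<sigma> \<sigma>' m = (if m = 0 then (\<lambda>_. 0) else coef_c p \<sigma> \<sigma>' (m - 1))"

definition of_log_growth :: "nat \<Rightarrow> (nat \<Rightarrow> nat \<Rightarrow> rat) \<Rightarrow> real \<Rightarrow> bool" where
  "of_log_growth p c' lam =
     (\<exists>B::real. \<forall>\<^sub>F n in sequentially.
        gauss_norm p (c' (n + 1)) \<le> ereal (B * real (n + 1) powr lam))"

definition exactly_log_growth :: "nat \<Rightarrow> (nat \<Rightarrow> nat \<Rightarrow> rat) \<Rightarrow> real \<Rightarrow> bool" where
  "exactly_log_growth p c' lam =
     (of_log_growth p c' lam \<and> (\<forall>lam'. lam' < lam \<longrightarrow> \<not> of_log_growth p c' lam'))"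

end

theory Submission
  imports Defs
begin

lemma pval_quot:
  assumes p: "prime p" and a: "a \<noteq> 0" and b: "b \<noteq> 0"
  shows "padic_val_rat p (of_int a / of_int b) =
     int (multiplicity (int p) a) - int (multiplicity (int p) b)"
proof -
  obtain a' b' where q: "quotient_of (of_int a / of_int b) = (a', b')"
    by (cases "quotient_of (of_int a / of_int b)") auto
  have bp: "b' > 0" using quotient_of_denom_pos[OF q] .
  have eq: "(of_int a / of_int b :: rat) = of_int a' / of_int b'" using quotient_of_div[OF q] .
  hence "(of_int a * of_int b' :: rat) = of_int a' * of_int b" using b bp
    by (simp add: field_simps)
  hence "(of_int (a * b') :: rat) = of_int (a' * b)" by simp
  hence eq2: "a * b' = a' * b" by (simp only: of_int_eq_iff)
  have a': "a' \<noteq> 0" using eq2 a bp by auto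
  have pe: "prime_elem (int p)" using p by simp
  have "multiplicity (int p) (a * b') = multiplicity (int p) (a' * b)" using eq2 by simp
  hence "multiplicity (int p) a + multiplicity (int p) b' = multiplicity (int p) a' + multiplicity (int p) b"
    using prime_elem_multiplicity_mult_distrib[OF pe] a b a' bp by simp
  thus ?thesis unfolding padic_val_rat_def q by simp
qed

lemma pabs_quot:
  assumes p: "prime p" and a: "a \<noteq> 0" and b: "b \<noteq> 0"
  shows "padic_abs p (of_int a / of_int b) =
     real p powr (real (multiplicity (int p) b) - real (multiplicity (int p) a))"
  using pval_quot[OF assms] a b unfolding padic_abs_def by simp

lemma mult_shift:
  fixes N x :: int
  assumes p: "prime p" and d: "int p ^ s dvd N" and x: "0 < x" "x < int p ^ s"
  shows "multiplicity (int p) (N + x) = multiplicity (int p) x"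
proof -
  let ?v = "multiplicity (int p) x"
  have p1: "int p > 1" using p prime_gt_1_nat by auto
  have "int p ^ ?v dvd x" by (rule multiplicity_dvd)
  hence "int p ^ ?v \<le> x" by (rule zdvd_imp_le) (use x in simp)
  hence "int p ^ ?v < int p ^ s" using x by linarith
  hence vs: "?v < s" by (rule power_less_imp_less_exp[OF p1])
  have d1: "int p ^ ?v dvd N" by (rule dvd_trans[OF le_imp_power_dvd d]) (use vs in simp)
  have d2: "int p ^ Suc ?v dvd N" by (rule dvd_trans[OF le_imp_power_dvd d]) (use vs in simp)
  show ?thesis
  proof (rule multiplicity_eqI)
    show "int p ^ ?v dvd N + x" using d1 \<open>int p ^ ?v dvd x\<close> by simp
    show "\<not> int p ^ Suc ?v dvd N + x"
    proof
      assume "int p ^ Suc ?v dvd N + x"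
      hence "int p ^ Suc ?v dvd (N + x) - N" using d2 by (rule dvd_diff)
      hence "int p ^ Suc ?v dvd x" by simp
      moreover have "x \<noteq> 0" using x by simp
      moreover have "\<not> is_unit (int p)" using p1 by simp
      ultimately have "Suc ?v \<le> ?v" using power_dvd_iff_le_multiplicity by blast
      thus False by simp
    qed
  qed
qed

lemma mult_distrib_int:
  assumes "prime p" "x \<noteq> 0" "y \<noteq> 0"
  shows "multiplicity (int p) (x * y) = multiplicity (int p) x + multiplicity (int p) (y::int)"
  using assms by (intro prime_elem_multiplicity_mult_distrib) auto

lemma binom_step:
  assumes p: "prime p" and e: "X * Y = Z * W" and nz: "X \<noteq> 0" "Y \<noteq> 0" "Z \<noteq> 0" "W \<noteq> (0::int)"
    and m: "multiplicity (int p) Z = multiplicity (int p) X" and w: "multiplicity (int p) W = 0"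
  shows "multiplicity (int p) Y = 0"
proof -
  have "multiplicity (int p) (X * Y) = multiplicity (int p) (Z * W)" using e by (rule arg_cong)
  thus ?thesis using mult_distrib_int[OF p nz(1,2)] mult_distrib_int[OF p nz(3,4)] m w by linarith
qed

lemma binom_unit:
  assumes p: "prime p" and d: "p ^ s dvd N"
  shows "i < p ^ s \<Longrightarrow> multiplicity (int p) (int (N + i choose i)) = 0"
proof (induction i)
  case 0 thus ?case by simp
next
  case (Suc i)
  have e0: "Suc i * (Suc (N + i) choose Suc i) = Suc (N+i) * (N + i choose i)"
    by (rule Suc_times_binomial)
  have e: "int (Suc i) * int (Suc (N + i) choose Suc i) = int (Suc (N+i)) * int (N + i choose i)"
    unfolding of_nat_mult[symmetric] e0 ..
  have nz1: "int (Suc (N + i) choose Suc i) \<noteq> 0" by (simp del: binomial_Suc_Suc)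
  have nz2: "int (N + i choose i) \<noteq> 0" by simp
  have ip: "int p ^ s dvd int N" using d unfolding of_nat_power[symmetric] of_nat_dvd_iff .
  have lt: "int (Suc i) < int p ^ s" using Suc.prems unfolding of_nat_power[symmetric] of_nat_less_iff .
  have m1: "multiplicity (int p) (int N + int (Suc i)) = multiplicity (int p) (int (Suc i))"
    by (rule mult_shift[OF p ip _ lt]) simp
  have "int N + int (Suc i) = int (Suc (N+i))" by simp
  hence m1': "multiplicity (int p) (int (Suc (N+i))) = multiplicity (int p) (int (Suc i))"
    using m1 by (simp only:)
  have IH: "multiplicity (int p) (int (N + i choose i)) = 0" using Suc by simp
  have "multiplicity (int p) (int (Suc (N + i) choose Suc i)) = 0"
    by (rule binom_step[OF p e _ nz1 _ nz2 m1' IH]) simp_all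
  moreover have "N + Suc i = Suc (N + i)" by simp
  ultimately show ?case by simp
qed


lemma idx_Suc: "p > 0 \<Longrightarrow> idx p d r + 1 = p ^ r * (p ^ (nat \<lfloor>d * real r\<rfloor> + 1) + 1)"
  unfolding idx_def by simp

lemma idx_mono:
  assumes p: "p > 1" and d: "d \<ge> 0"
  shows "idx p d r < idx p d (Suc r)"
proof -
  let ?m = "nat \<lfloor>d * real r\<rfloor>" and ?m' = "nat \<lfloor>d * real (Suc r)\<rfloor>"
  have "d * real r \<le> d * real (Suc r)" using d by (simp add: mult_left_mono)
  hence mm: "?m \<le> ?m'" by (simp add: floor_mono nat_mono)
  have "p ^ (?m + 1) \<le> p ^ (?m' + 1)" using p mm by (simp add: power_increasing)
  hence a: "p ^ (?m + 1) + 1 \<le> p ^ (?m' + 1) + 1" by simp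
  have pr: "p ^ r > 0" using p by simp
  have X: "0 < p ^ r * (p ^ (?m + 1) + 1)" using pr by simp
  have "1 * (p ^ r * (p ^ (?m + 1) + 1)) < p * (p ^ r * (p ^ (?m + 1) + 1))"
    by (rule mult_strict_right_mono[OF _ X]) (use p in simp)
  hence "p ^ r * (p ^ (?m + 1) + 1) < p * p ^ r * (p ^ (?m + 1) + 1)"
    by (metis mult_1_left mult.assoc)
  also have "\<dots> \<le> p * p ^ r * (p ^ (?m' + 1) + 1)" using a by (simp add: mult_left_mono)
  finally have "idx p d r + 1 < idx p d (Suc r) + 1"
    using idx_Suc[of p d r] idx_Suc[of p d "Suc r"] p by (simp add: ac_simps)
  thus ?thesis by simp
qed

lemma idx_strict_mono: "p > 1 \<Longrightarrow> d \<ge> 0 \<Longrightarrow> strict_mono (idx p d)"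
  using idx_mono by (simp add: strict_mono_Suc_iff)

lemma seq_a_idx:
  assumes p: "p > 1" and s: "\<sigma>' < \<sigma>" "\<sigma> < 1"
  shows "seq_a p \<sigma> \<sigma>' (idx p ((\<sigma> - \<sigma>') / (1 - \<sigma>)) r) = of_nat p ^ nat \<lfloor>\<sigma>' * real r\<rfloor>"
proof -
  let ?d = "(\<sigma> - \<sigma>') / (1 - \<sigma>)"
  have "?d \<ge> 0" using s by simp
  hence inj: "inj (idx p ?d)" using idx_strict_mono[OF p] strict_mono_imp_inj_on by blast
  have "(THE r'. idx p ?d r = idx p ?d r') = r"
    using inj by (auto dest: injD)
  thus ?thesis unfolding seq_a_def Let_def by auto
qed

lemma seq_a_not:
  assumes "\<not> (\<exists>r. k = idx p ((\<sigma> - \<sigma>') / (1 - \<sigma>)) r)"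
  shows "seq_a p \<sigma> \<sigma>' k = 0"
  using assms unfolding seq_a_def Let_def by auto

lemma coef_eq:
  assumes p: "p > 1" and s: "\<sigma>' < \<sigma>" "\<sigma> < 1"
    and k: "n + j = idx p ((\<sigma> - \<sigma>') / (1 - \<sigma>)) r"
  shows "coef_c p \<sigma> \<sigma>' n j = of_int (int p ^ nat \<lfloor>\<sigma>' * real r\<rfloor> * int ((n + j) choose n)) / of_int (int (n + 1))"
  unfolding coef_c_def k seq_a_idx[OF p s] by simp


lemma mult_idx1:
  assumes p: "prime p"
  shows "multiplicity (int p) (int (idx p d r + 1)) = r"
proof -
  have p1: "p > 1" using p prime_gt_1_nat by auto
  have pe: "prime_elem (int p)" using p by simp
  define m where "m = nat \<lfloor>d * real r\<rfloor>"
  define M where "M = int p ^ (m + 1) + 1"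
  have e0: "idx p d r + 1 = p ^ r * (p ^ (m + 1) + 1)" unfolding m_def by (rule idx_Suc) (use p1 in simp)
  have "int (idx p d r + 1) = int (p ^ r * (p ^ (m + 1) + 1))" using e0 by (rule arg_cong)
  also have "\<dots> = int p ^ r * M" unfolding M_def by (simp only: of_nat_mult of_nat_power of_nat_add of_nat_1)
  finally have e: "int (idx p d r + 1) = int p ^ r * M" .
  have nd: "\<not> int p dvd M"
  proof
    assume a: "int p dvd M"
    have "int p dvd int p ^ (m + 1)" by (simp only: power_Suc dvd_triv_left add.commute[of m 1] plus_1_eq_Suc)
    hence "int p dvd 1" using a unfolding M_def using dvd_add_right_iff by blast
    hence "int p \<le> 1" by (rule zdvd_imp_le) simp
    thus False using p1 by simp
  qed
  have Mnz: "M \<noteq> 0" using nd by auto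
  have pnz: "int p ^ r \<noteq> 0" using p1 by simp
  have "multiplicity (int p) (int p ^ r * M) = multiplicity (int p) (int p ^ r) + multiplicity (int p) M"
    by (rule mult_distrib_int[OF p pnz Mnz])
  also have "multiplicity (int p) (int p ^ r) = r" using pe by (rule multiplicity_prime_power)
  also have "multiplicity (int p) M = 0" using nd by (rule not_dvd_imp_multiplicity_0)
  finally show ?thesis using e by simp
qed

lemma coef_bound:
  assumes p: "prime p" and s: "0 \<le> \<sigma>'" "\<sigma>' < \<sigma>" "\<sigma> < 1"
  shows "padic_abs p (coef_c p \<sigma> \<sigma>' n j) \<le> real p * real (n + 1) powr (1 - \<sigma>')"
proof (cases "\<exists>r. n + j = idx p ((\<sigma> - \<sigma>') / (1 - \<sigma>)) r")
  case False
  hence "coef_c p \<sigma> \<sigma>' n j = 0" unfolding coef_c_def using seq_a_not by auto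
  thus ?thesis unfolding padic_abs_def by simp
next
  case True
  then obtain r where k: "n + j = idx p ((\<sigma> - \<sigma>') / (1 - \<sigma>)) r" by blast
  let ?d = "(\<sigma> - \<sigma>') / (1 - \<sigma>)"
  define e where "e = nat \<lfloor>\<sigma>' * real r\<rfloor>"
  define K where "K = n + j"
  have p1: "p > 1" using p prime_gt_1_nat by auto
  have pe: "prime_elem (int p)" using p by simp
  let ?v = "multiplicity (int p)"
  have ce: "coef_c p \<sigma> \<sigma>' n j = of_int (int p ^ e * int (K choose n)) / of_int (int (n + 1))"
    unfolding e_def K_def by (rule coef_eq[OF p1 s(2,3) k])
  have Cnz: "int (K choose n) \<noteq> 0" unfolding K_def by simp
  have pnz: "int p ^ e \<noteq> 0" using p1 by simp
  have ab: "padic_abs p (coef_c p \<sigma> \<sigma>' n j) = real p powr (real (?v (int (n+1))) - real (?v (int p ^ e * int (K choose n))))"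
    unfolding ce by (rule pabs_quot[OF p]) (use Cnz pnz in auto)
  have ve: "?v (int p ^ e * int (K choose n)) = e + ?v (int (K choose n))"
    using mult_distrib_int[OF p pnz Cnz] multiplicity_prime_power[OF pe, of e] by simp
  have bid0: "Suc K * (K choose n) = (Suc K choose Suc n) * Suc n" by (rule Suc_times_binomial_eq)
  have bid: "int (Suc K) * int (K choose n) = int (Suc K choose Suc n) * int (Suc n)"
    unfolding of_nat_mult[symmetric] bid0 ..
  have C2nz: "int (Suc K choose Suc n) \<noteq> 0" using K_def by (simp del: binomial_Suc_Suc)
  have "?v (int (Suc K) * int (K choose n)) = ?v (int (Suc K choose Suc n) * int (Suc n))"
    using bid by (rule arg_cong)
  moreover have "?v (int (Suc K) * int (K choose n)) = ?v (int (Suc K)) + ?v (int (K choose n))"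
    by (rule mult_distrib_int[OF p _ Cnz]) simp
  moreover have "?v (int (Suc K choose Suc n) * int (Suc n)) = ?v (int (Suc K choose Suc n)) + ?v (int (Suc n))"
    by (rule mult_distrib_int[OF p C2nz]) simp
  ultimately have "?v (int (Suc K)) + ?v (int (K choose n)) = ?v (int (Suc K choose Suc n)) + ?v (int (Suc n))"
    by simp
  moreover have "?v (int (Suc K)) = r" using mult_idx1[OF p, of ?d r] k unfolding K_def by simp
  ultimately have r1: "?v (int (n+1)) \<le> r + ?v (int (K choose n))" by simp
  define u where "u = min r (?v (int (n+1)))"
  have X: "real (?v (int (n+1))) - real (?v (int p ^ e * int (K choose n))) \<le> real u - real e"
    using r1 ve unfolding u_def by simp
  have "real_of_int \<lfloor>\<sigma>' * real r\<rfloor> > \<sigma>' * real r - 1" by linarith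
  moreover have "\<lfloor>\<sigma>' * real r\<rfloor> \<ge> 0" using s by simp
  ultimately have ee: "real e \<ge> \<sigma>' * real r - 1" unfolding e_def by simp
  have "\<sigma>' * real u \<le> \<sigma>' * real r" using s(1) unfolding u_def by (simp add: mult_left_mono)
  hence X2: "real u - real e \<le> 1 + real u * (1 - \<sigma>')" using ee by (simp add: algebra_simps)
  have pu: "int p ^ u dvd int (n+1)"
    by (rule dvd_trans[OF le_imp_power_dvd multiplicity_dvd]) (simp add: u_def)
  hence "int p ^ u \<le> int (n+1)" by (rule zdvd_imp_le) simp
  hence "int (p ^ u) \<le> int (n+1)" by (simp only: of_nat_power)
  hence "p ^ u \<le> n+1" by (simp only: of_nat_le_iff)
  hence pu': "real p ^ u \<le> real (n+1)" by (metis of_nat_le_iff of_nat_power)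
  have "padic_abs p (coef_c p \<sigma> \<sigma>' n j) \<le> real p powr (1 + real u * (1 - \<sigma>'))"
    unfolding ab using X X2 p1 by (intro powr_mono) auto
  also have "\<dots> = real p * (real p powr real u) powr (1 - \<sigma>')"
    using p1 by (simp add: powr_add powr_powr)
  also have "\<dots> = real p * (real p ^ u) powr (1 - \<sigma>')"
    using p1 by (simp add: powr_realpow)
  also have "\<dots> \<le> real p * real (n+1) powr (1 - \<sigma>')"
    using pu' s p1 by (intro mult_left_mono powr_mono2) auto
  finally show ?thesis .
qed


lemma coef_lower:
  fixes r :: nat and p n j :: nat
  assumes p: "prime p" and s: "0 \<le> \<sigma>'" "\<sigma>' < \<sigma>" "\<sigma> < 1"
  defines "n \<equiv> p ^ r - 1"
  defines "j \<equiv> idx p ((\<sigma> - \<sigma>') / (1 - \<sigma>)) r - n"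
  shows "real (n + 1) = real p ^ r"
    and "padic_abs p (coef_c p \<sigma> \<sigma>' n j) \<ge> (real p ^ r) powr (1 - \<sigma>')"
proof -
  let ?d = "(\<sigma> - \<sigma>') / (1 - \<sigma>)"
  define m where "m = nat \<lfloor>?d * real r\<rfloor>"
  define N where "N = p ^ (r + (m + 1))"
  have p1: "p > 1" using p prime_gt_1_nat by auto
  have pe: "prime_elem (int p)" using p by simp
  let ?v = "multiplicity (int p)"
  have pr: "p ^ r \<ge> 1" using p1 by simp
  show n1: "real (n + 1) = real p ^ r" unfolding n_def using pr by simp
  have "idx p ?d r + 1 = p ^ r * (p ^ (m + 1) + 1)" unfolding m_def using idx_Suc[of p] p1 by simp
  also have "\<dots> = N + p ^ r" unfolding N_def by (simp add: power_add algebra_simps)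
  finally have iN: "idx p ?d r = N + n" unfolding n_def using pr by simp
  have k: "n + j = idx p ?d r" unfolding j_def iN by simp
  define e where "e = nat \<lfloor>\<sigma>' * real r\<rfloor>"
  have ce: "coef_c p \<sigma> \<sigma>' n j = of_int (int p ^ e * int ((N + n) choose n)) / of_int (int (n + 1))"
    unfolding e_def using coef_eq[OF p1 s(2,3) k] unfolding iN[symmetric] k by simp
  have Cnz: "int ((N + n) choose n) \<noteq> 0" by simp
  have pnz: "int p ^ e \<noteq> 0" using p1 by simp
  have ab: "padic_abs p (coef_c p \<sigma> \<sigma>' n j) = real p powr (real (?v (int (n+1))) - real (?v (int p ^ e * int ((N + n) choose n))))"
    unfolding ce by (rule pabs_quot[OF p]) (use Cnz pnz in auto)
  have ve: "?v (int p ^ e * int ((N + n) choose n)) = e + ?v (int ((N + n) choose n))"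
    using prime_elem_multiplicity_mult_distrib[OF pe pnz Cnz] pe by simp
  have dv: "p ^ r dvd N" unfolding N_def by (simp add: power_add)
  have "n < p ^ r" unfolding n_def using pr by simp
  hence v0: "?v (int ((N + n) choose n)) = 0" by (rule binom_unit[OF p dv])
  have "int (n + 1) = int p ^ r" unfolding n_def using pr by simp
  hence vn: "?v (int (n+1)) = r" using pe by simp
  have "real_of_int \<lfloor>\<sigma>' * real r\<rfloor> \<le> \<sigma>' * real r" by linarith
  moreover have "\<lfloor>\<sigma>' * real r\<rfloor> \<ge> 0" using s by simp
  ultimately have ee: "real e \<le> \<sigma>' * real r" unfolding e_def by simp
  have "(real p ^ r) powr (1 - \<sigma>') = real p powr (real r * (1 - \<sigma>'))"
    using p1 by (simp add: powr_powr powr_realpow[symmetric])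
  also have "\<dots> \<le> real p powr (real r - real e)"
    using p1 ee by (intro powr_mono) (auto simp: algebra_simps)
  also have "\<dots> = padic_abs p (coef_c p \<sigma> \<sigma>' n j)" unfolding ab ve v0 vn by simp
  finally show "padic_abs p (coef_c p \<sigma> \<sigma>' n j) \<ge> (real p ^ r) powr (1 - \<sigma>')" .
qed


lemma gn_le: "(\<And>j. padic_abs p (f j) \<le> B) \<Longrightarrow> gauss_norm p f \<le> ereal B"
  unfolding gauss_norm_def by (rule SUP_least) simp

lemma gn_ge: "ereal (padic_abs p (f j)) \<le> gauss_norm p f"
  unfolding gauss_norm_def by (rule SUP_upper) simp

lemma grow:
  assumes p: "p > (1::nat)" and c: "c > 0"
  shows "\<exists>r\<ge>R. B < (real p ^ r) powr c"
proof -
  let ?x = "real p powr c"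
  have x1: "1 < ?x" using p c by (simp add: gr_one_powr)
  obtain r1 where r1: "B < ?x ^ r1" using real_arch_pow[OF x1] by blast
  define r where "r = max r1 R"
  have "?x ^ r1 \<le> ?x ^ r" unfolding r_def using x1 by (intro power_increasing) auto
  also have "?x ^ r = (real p ^ r) powr c"
    using p by (simp add: powr_realpow[symmetric] powr_powr mult.commute)
  finally show ?thesis using r1 unfolding r_def by (intro exI[of _ "max r1 R"]) auto
qed

lemma pow_ge: "p > (1::nat) \<Longrightarrow> r \<le> p ^ r - 1"
proof -
  assume p: "p > 1"
  have "r < 2 ^ r" by (rule less_exp)
  also have "(2::nat) ^ r \<le> p ^ r" using p by (intro power_mono) auto
  finally show ?thesis by simp
qed

theorem mainTheorem4:
  fixes p :: nat and \<sigma> \<sigma>' :: real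
  assumes "prime p" and "0 \<le> \<sigma>'" and "\<sigma>' < \<sigma>" and "\<sigma> < 1"
  shows "(\<forall>n. gauss_norm p (coef_c p \<sigma> \<sigma>' n)
              \<le> ereal (real p * real (n + 1) powr (1 - \<sigma>')))
       \<and> (\<forall>lam. 0 \<le> lam \<and> lam < 1 - \<sigma>' \<longrightarrow>
              (SUP n. gauss_norm p (coef_c p \<sigma> \<sigma>' n) / ereal (real (n + 1) powr lam)) = \<infinity>)
       \<and> exactly_log_growth p (coef_y p \<sigma> \<sigma>') (1 - \<sigma>')"
proof -
  note p = assms(1) and s = assms(2-4)
  have p1: "p > 1" using p prime_gt_1_nat by auto
  have up: "\<And>n. gauss_norm p (coef_c p \<sigma> \<sigma>' n) \<le> ereal (real p * real (n + 1) powr (1 - \<sigma>'))"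
    by (rule gn_le, rule coef_bound[OF p s])
  have low: "\<exists>g. gauss_norm p (coef_c p \<sigma> \<sigma>' (p ^ r - 1)) = ereal g \<and> g \<ge> (real p ^ r) powr (1 - \<sigma>')
          \<and> real (p ^ r - 1 + 1) = real p ^ r" for r
  proof -
    let ?n = "p ^ r - 1"
    let ?j = "idx p ((\<sigma> - \<sigma>') / (1 - \<sigma>)) r - ?n"
    have L: "ereal ((real p ^ r) powr (1 - \<sigma>')) \<le> gauss_norm p (coef_c p \<sigma> \<sigma>' ?n)"
      by (rule order_trans[OF _ gn_ge[of p "coef_c p \<sigma> \<sigma>' ?n" ?j]]) (use coef_lower(2)[OF p s, of r] in simp)
    have U: "gauss_norm p (coef_c p \<sigma> \<sigma>' ?n) \<le> ereal (real p * real (?n + 1) powr (1 - \<sigma>'))"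
      by (rule up)
    obtain g where g: "gauss_norm p (coef_c p \<sigma> \<sigma>' ?n) = ereal g"
      using L U by (cases "gauss_norm p (coef_c p \<sigma> \<sigma>' ?n)") auto
    show ?thesis using g L coef_lower(1)[OF p s, of r] by auto
  qed
  have part2: "(SUP n. gauss_norm p (coef_c p \<sigma> \<sigma>' n) / ereal (real (n + 1) powr lam)) = \<infinity>"
    if lam: "0 \<le> lam" "lam < 1 - \<sigma>'" for lam
  proof -
    have *: "\<exists>n. ereal B < gauss_norm p (coef_c p \<sigma> \<sigma>' n) / ereal (real (n + 1) powr lam)" for B
    proof -
      obtain r where r: "B < (real p ^ r) powr (1 - \<sigma>' - lam)"
        using grow[OF p1, of "1 - \<sigma>' - lam" 0 B] lam by auto
      obtain g where g: "gauss_norm p (coef_c p \<sigma> \<sigma>' (p ^ r - 1)) = ereal g"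
        "g \<ge> (real p ^ r) powr (1 - \<sigma>')" "real (p ^ r - 1 + 1) = real p ^ r"
        using low[of r] by blast
      let ?X = "(real p ^ r) powr lam"
      have X: "?X > 0" using p1 by simp
      have "B < (real p ^ r) powr (1 - \<sigma>') / ?X"
        using r powr_diff[of "real p ^ r" "1 - \<sigma>'" lam] by simp
      also have "\<dots> \<le> g / ?X" by (rule divide_right_mono[OF g(2)]) (use X in simp)
      finally have "ereal B < ereal (g / ?X)" by simp
      also have "ereal (g / ?X) = ereal g / ereal ?X" using X by simp
      also have "\<dots> = gauss_norm p (coef_c p \<sigma> \<sigma>' (p ^ r - 1)) / ereal (real (p ^ r - 1 + 1) powr lam)"
        unfolding g(1) g(3) ..
      finally show ?thesis by blast
    qed
    have "\<exists>n. x < gauss_norm p (coef_c p \<sigma> \<sigma>' n) / ereal (real (n + 1) powr lam)" if x: "x < top" for x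
    proof (cases x)
      case (real B)
      thus ?thesis using * by blast
    next
      case PInf thus ?thesis using x by simp
    next
      case MInf
      obtain n where "ereal 0 < gauss_norm p (coef_c p \<sigma> \<sigma>' n) / ereal (real (n + 1) powr lam)"
        using *[of 0] by blast
      thus ?thesis using MInf by (intro exI[of _ n]) (rule less_trans[OF _ \<open>ereal 0 < _\<close>], simp)
    qed
    hence "(SUP n. gauss_norm p (coef_c p \<sigma> \<sigma>' n) / ereal (real (n + 1) powr lam)) = top"
      unfolding SUP_eq_top_iff by blast
    thus ?thesis by (simp add: top_ereal_def)
  qed
  have olg: "of_log_growth p (coef_y p \<sigma> \<sigma>') (1 - \<sigma>')"
  proof -
    have "\<forall>n. gauss_norm p (coef_y p \<sigma> \<sigma>' (n+1)) \<le> ereal (real p * real (n+1) powr (1-\<sigma>'))"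
      using up by (simp add: coef_y_def)
    thus ?thesis unfolding of_log_growth_def by (intro exI[of _ "real p"] always_eventually)
  qed
  have nolg: "\<not> of_log_growth p (coef_y p \<sigma> \<sigma>') lam'" if lam': "lam' < 1 - \<sigma>'" for lam'
  proof
    assume "of_log_growth p (coef_y p \<sigma> \<sigma>') lam'"
    then obtain B N0 where B: "\<And>n. n \<ge> N0 \<Longrightarrow> gauss_norm p (coef_c p \<sigma> \<sigma>' n) \<le> ereal (B * real (n + 1) powr lam')"
      unfolding of_log_growth_def coef_y_def eventually_sequentially by auto
    obtain r where r: "r \<ge> N0" "B < (real p ^ r) powr (1 - \<sigma>' - lam')"
      using grow[OF p1, of "1 - \<sigma>' - lam'" N0 B] lam' by auto
    obtain g where g: "gauss_norm p (coef_c p \<sigma> \<sigma>' (p ^ r - 1)) = ereal g"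
      "g \<ge> (real p ^ r) powr (1 - \<sigma>')" "real (p ^ r - 1 + 1) = real p ^ r"
      using low[of r] by blast
    have "p ^ r - 1 \<ge> N0" using pow_ge[OF p1, of r] r(1) by simp
    from B[OF this] have "g \<le> B * (real p ^ r) powr lam'" unfolding g(1) g(3) by simp
    moreover have "B * (real p ^ r) powr lam' < (real p ^ r) powr (1 - \<sigma>' - lam') * (real p ^ r) powr lam'"
      using r(2) p1 by simp
    moreover have "(real p ^ r) powr (1 - \<sigma>' - lam') * (real p ^ r) powr lam' = (real p ^ r) powr (1 - \<sigma>')"
      by (simp add: powr_add[symmetric])
    ultimately show False using g(2) by linarith
  qed
  show ?thesis using up part2 olg nolg unfolding exactly_log_growth_def by blast
qed

end
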